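(* Let $S$ be an $E$-solid locally inverse semigroup, $\rho$ an inverse semigroup congruence on $S$ whose idempotent classes are completely simple subsemigroups, $T=S/\rho$, and $\mathcal C$ the derived semigroupoid. For an arrow $a$ of $\mathcal C$ let $\widehat a$ denote the unique stable arrow $b$ with $b\le a$. Then for any arrows $a,b$ of $\mathcal C$ with $\omega(a)=\alpha(b)$: (1) $\widehat{\widehat a}=\widehat a$; (2) $\widehat{a\circ b}=\widehat a\circ\widehat b$; (3) $\widehat{(b\curlywedge a)}=(\widehat b\curlywedge\widehat a)$.
   Context: The derived semigroupoid $\mathcal C$ has object set $T$ and arrows $\mathcal C(\alpha,\beta)=\{(\alpha,s,\beta)\in T\times S\times T:\alpha\cdot s\rho=\beta,\ \beta\cdot(s\rho)^{-1}=\alpha\}$; for $a=(\alpha,s,\beta)$, $\alpha(a)=\alpha$, $\omega(a)=\beta$; composition $(\alpha,s,\beta)\circ(\beta,t,\gamma)=(\alpha,st,\gamma)$. An arrow $(\alpha,s,\beta)$ is stable if $s\rho=\alpha^{-1}\beta$. Natural partial order on $\mathcal C$: $(\alpha,s,\beta)\le(\gamma,t,\delta)$ iff $\alpha=\gamma$, $\beta=\delta$ and $s\le t$ in the natural partial order of $S$ (it is known that each arrow $a$ has a unique stable $b\le a$). Inverses of $(\alpha,s,\beta)$ are $(\beta,s^*,\alpha)$ with $s^*$ an inverse of $s$ in $S$. Each loop semigroup $\mathcal C(\gamma,\gamma)$ is locally inverse, so sandwich sets $S(e,f)=\{g\text{ idempotent}: g\circ e=g=f\circ g,\ e\circ g\circ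 f=e\circ f\}$ are singletons; for arrows $b,a$ with $\alpha(b)=\omega(a)$, $(b\curlywedge a)$ is the unique element of $S(a'\circ a,\ b\circ b')$ for any inverses $a',b'$ of $a,b$. Locally inverse: regular with every $eSe$ inverse; $E$-solid: idempotent-generated subsemigroup completely regular. *)

theory Defs
  imports Main
begin

section \<open>Semigroup notions (the semigroup S is the whole type 'a)\<close>

definition idem :: "'a::semigroup_mult \<Rightarrow> bool" where
  "idem e \<longleftrightarrow> e * e = e"

definition is_inverse :: "'a::semigroup_mult \<Rightarrow> 'a \<Rightarrow> bool" where
  "is_inverse y x \<longleftrightarrow> x * y * x = x \<and> y * x * y = y"

definition regular_sg :: "'a::semigroup_mult itself \<Rightarrow> bool" where
  "regular_sg _ \<longleftrightarrow> (\<forall>x::'a. \<exists>y. is_inverse y x)"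

definition inverse_subsg :: "'a::semigroup_mult set \<Rightarrow> bool" where
  "inverse_subsg A \<longleftrightarrow> (\<forall>x\<in>A. \<forall>y\<in>A. x * y \<in> A) \<and> (\<forall>x\<in>A. \<exists>!y. y \<in> A \<and> is_inverse y x)"

definition local_submonoid :: "'a::semigroup_mult \<Rightarrow> 'a set" where
  "local_submonoid e = {e * s * e | s. True}"

definition locally_inverse :: "'a::semigroup_mult itself \<Rightarrow> bool" where
  "locally_inverse T \<longleftrightarrow> regular_sg T \<and>
     (\<forall>e::'a. idem e \<longrightarrow> inverse_subsg (local_submonoid e))"

inductive_set idem_generated :: "'a::semigroup_mult set" where
  gen: "idem e \<Longrightarrow> e \<in> idem_generated"
| mult: "x \<in> idem_generated \<Longrightarrow> y \<in> idem_generated \<Longrightarrow> x * y \<in> idem_generated"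

text \<open>A subsemigroup is completely regular iff each element lies in a subgroup of it.\<close>
definition completely_regular_subsg :: "'a::semigroup_mult set \<Rightarrow> bool" where
  "completely_regular_subsg A \<longleftrightarrow> (\<forall>x\<in>A. \<forall>y\<in>A. x * y \<in> A) \<and>
     (\<forall>a\<in>A. \<exists>x\<in>A. a * x * a = a \<and> a * x = x * a)"

definition E_solid :: "'a::semigroup_mult itself \<Rightarrow> bool" where
  "E_solid _ \<longleftrightarrow> completely_regular_subsg (idem_generated :: 'a set)"

definition completely_simple_subsg :: "'a::semigroup_mult set \<Rightarrow> bool" where
  "completely_simple_subsg A \<longleftrightarrow> A \<noteq> {} \<and> (\<forall>x\<in>A. \<forall>y\<in>A. x * y \<in> A) \<and>
     (\<forall>I. I \<subseteq> A \<and> I \<noteq> {} \<and> (\<forall>x\<in>A. \<forall>i\<in>I. x * i \<in> I \<and> i * x \<in> I) \<longrightarrow> I = A) \<and>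
     (\<exists>e\<in>A. idem e \<and> (\<forall>f\<in>A. idem f \<and> f * e = f \<and> e * f = f \<longrightarrow> f = e))"

definition nat_le :: "'a::semigroup_mult \<Rightarrow> 'a \<Rightarrow> bool" where
  "nat_le s t \<longleftrightarrow> (\<exists>e f. idem e \<and> idem f \<and> s = e * t \<and> s = t * f)"

definition congruence :: "('a::semigroup_mult \<Rightarrow> 'a \<Rightarrow> bool) \<Rightarrow> bool" where
  "congruence \<rho> \<longleftrightarrow> equivp \<rho> \<and>
     (\<forall>x y z. \<rho> x y \<longrightarrow> \<rho> (z * x) (z * y) \<and> \<rho> (x * z) (y * z))"

definition cls :: "('a \<Rightarrow> 'a \<Rightarrow> bool) \<Rightarrow> 'a \<Rightarrow> 'a set" where
  "cls \<rho> x = {y. \<rho> x y}"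

definition quot :: "('a \<Rightarrow> 'a \<Rightarrow> bool) \<Rightarrow> 'a set set" where
  "quot \<rho> = range (cls \<rho>)"

definition tmul :: "('a::semigroup_mult \<Rightarrow> 'a \<Rightarrow> bool) \<Rightarrow> 'a set \<Rightarrow> 'a set \<Rightarrow> 'a set" where
  "tmul \<rho> A B = {z. \<exists>x\<in>A. \<exists>y\<in>B. \<rho> (x * y) z}"

definition tinverse :: "('a::semigroup_mult \<Rightarrow> 'a \<Rightarrow> bool) \<Rightarrow> 'a set \<Rightarrow> 'a set \<Rightarrow> bool" where
  "tinverse \<rho> B A \<longleftrightarrow> tmul \<rho> (tmul \<rho> A B) A = A \<and> tmul \<rho> (tmul \<rho> B A) B = B"

definition inverse_congruence :: "('a::semigroup_mult \<Rightarrow> 'a \<Rightarrow> bool) \<Rightarrow> bool" where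
  "inverse_congruence \<rho> \<longleftrightarrow> congruence \<rho> \<and>
     (\<forall>A\<in>quot \<rho>. \<exists>!B. B \<in> quot \<rho> \<and> tinverse \<rho> B A)"

definition tinv :: "('a::semigroup_mult \<Rightarrow> 'a \<Rightarrow> bool) \<Rightarrow> 'a set \<Rightarrow> 'a set" where
  "tinv \<rho> A = (THE B. B \<in> quot \<rho> \<and> tinverse \<rho> B A)"

type_synonym 'a arrow = "'a set \<times> 'a \<times> 'a set"

definition dom_a :: "'a arrow \<Rightarrow> 'a set" where "dom_a a = fst a"
definition cod_a :: "'a arrow \<Rightarrow> 'a set" where "cod_a a = snd (snd a)"
definition lbl :: "'a arrow \<Rightarrow> 'a" where "lbl a = fst (snd a)"

definition is_arrow :: "('a::semigroup_mult \<Rightarrow> 'a \<Rightarrow> bool) \<Rightarrow> 'a arrow \<Rightarrow> bool" where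
  "is_arrow \<rho> a \<longleftrightarrow> (case a of (\<alpha>, s, \<beta>) \<Rightarrow>
     \<alpha> \<in> quot \<rho> \<and> \<beta> \<in> quot \<rho> \<and> tmul \<rho> \<alpha> (cls \<rho> s) = \<beta> \<and>
     tmul \<rho> \<beta> (tinv \<rho> (cls \<rho> s)) = \<alpha>)"

definition comp_a :: "'a::semigroup_mult arrow \<Rightarrow> 'a arrow \<Rightarrow> 'a arrow" where
  "comp_a a b = (dom_a a, lbl a * lbl b, cod_a b)"

definition stable :: "('a::semigroup_mult \<Rightarrow> 'a \<Rightarrow> bool) \<Rightarrow> 'a arrow \<Rightarrow> bool" where
  "stable \<rho> a \<longleftrightarrow> cls \<rho> (lbl a) = tmul \<rho> (tinv \<rho> (dom_a a)) (cod_a a)"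

definition arrow_le :: "'a::semigroup_mult arrow \<Rightarrow> 'a arrow \<Rightarrow> bool" where
  "arrow_le a b \<longleftrightarrow> dom_a a = dom_a b \<and> cod_a a = cod_a b \<and> nat_le (lbl a) (lbl b)"

definition hat :: "('a::semigroup_mult \<Rightarrow> 'a \<Rightarrow> bool) \<Rightarrow> 'a arrow \<Rightarrow> 'a arrow" where
  "hat \<rho> a = (THE b. is_arrow \<rho> b \<and> stable \<rho> b \<and> arrow_le b a)"

definition arrow_inverse :: "('a::semigroup_mult \<Rightarrow> 'a \<Rightarrow> bool) \<Rightarrow> 'a arrow \<Rightarrow> 'a arrow \<Rightarrow> bool" where
  "arrow_inverse \<rho> a' a \<longleftrightarrow> is_arrow \<rho> a' \<and> dom_a a' = cod_a a \<and> cod_a a' = dom_a a \<and>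
     is_inverse (lbl a') (lbl a)"

definition arrow_inv :: "('a::semigroup_mult \<Rightarrow> 'a \<Rightarrow> bool) \<Rightarrow> 'a arrow \<Rightarrow> 'a arrow" where
  "arrow_inv \<rho> a = (SOME a'. arrow_inverse \<rho> a' a)"

definition loop_idem :: "('a::semigroup_mult \<Rightarrow> 'a \<Rightarrow> bool) \<Rightarrow> 'a set \<Rightarrow> 'a arrow \<Rightarrow> bool" where
  "loop_idem \<rho> \<gamma> g \<longleftrightarrow> is_arrow \<rho> g \<and> dom_a g = \<gamma> \<and> cod_a g = \<gamma> \<and> comp_a g g = g"

definition sandwich :: "('a::semigroup_mult \<Rightarrow> 'a \<Rightarrow> bool) \<Rightarrow> 'a set \<Rightarrow> 'a arrow \<Rightarrow> 'a arrow \<Rightarrow> 'a arrow set" where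
  "sandwich \<rho> \<gamma> e f = {g. loop_idem \<rho> \<gamma> g \<and> comp_a g e = g \<and> comp_a f g = g \<and>
      comp_a (comp_a e g) f = comp_a e f}"

definition wedge :: "('a::semigroup_mult \<Rightarrow> 'a \<Rightarrow> bool) \<Rightarrow> 'a arrow \<Rightarrow> 'a arrow \<Rightarrow> 'a arrow" where
  "wedge \<rho> b a = (THE g. g \<in> sandwich \<rho> (cod_a a)
      (comp_a (arrow_inv \<rho> a) a) (comp_a b (arrow_inv \<rho> b)))"

end

theory Submission
  imports Defs
begin



locale isg =
  fixes C :: "'b set" and m :: "'b \<Rightarrow> 'b \<Rightarrow> 'b"
  assumes closed[simp]: "x\<in>C \<Longrightarrow> y\<in>C \<Longrightarrow> m x y \<in> C"
  and assoc[simp]: "x\<in>C \<Longrightarrow> y\<in>C \<Longrightarrow> z\<in>C \<Longrightarrow> m (m x y) z = m x (m y z)"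
  and uinv: "x\<in>C \<Longrightarrow> \<exists>!y. y\<in>C \<and> m (m x y) x = x \<and> m (m y x) y = y"
begin

lemma inv_uniq: "x\<in>C \<Longrightarrow> y\<in>C \<Longrightarrow> z\<in>C \<Longrightarrow> m x (m y x) = x \<Longrightarrow> m y (m x y) = y
   \<Longrightarrow> m x (m z x) = x \<Longrightarrow> m z (m x z) = z \<Longrightarrow> y = z"
  using uinv[of x] by (metis assoc)

lemma idem_prod:
  assumes x: "x\<in>C" and y: "y\<in>C" and xx: "m x x = x" and yy: "m y y = y"
  shows "m (m x y) (m x y) = m x y"
proof -
  have xx': "m x (m x w) = m x w" if "w\<in>C" for w using that xx x by (metis assoc)
  have yy': "m y (m y w) = m y w" if "w\<in>C" for w using that yy y by (metis assoc)
  have zC: "m x y \<in> C" using x y by simp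
  obtain u where uC: "u\<in>C" and u1: "m (m (m x y) u) (m x y) = m x y" and u2: "m (m u (m x y)) u = u"
    using uinv[OF zC] by blast
  have u1': "m x (m y (m u (m x y))) = m x y" using u1 x y uC by simp
  have u2': "m u (m x (m y u)) = u" using u2 x y uC by simp
  have vC: "m y (m u x) \<in> C" using x y uC by simp
  have v1: "m (m x y) (m (m y (m u x)) (m x y)) = m x y"
  proof -
    have "m (m x y) (m (m y (m u x)) (m x y)) = m x (m y (m y (m u (m x (m x y)))))" using x y uC by simp
    also have "\<dots> = m x (m y (m u (m x y)))" using x y uC by (simp add: xx' yy')
    finally show ?thesis using u1' by simp
  qed
  have v2: "m (m y (m u x)) (m (m x y) (m y (m u x))) = m y (m u x)"
  proof -
    have "m (m y (m u x)) (m (m x y) (m y (m u x))) = m y (m u (m x (m x (m y (m y (m u x))))))" using x y uC by simp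
    also have "\<dots> = m y (m u (m x (m y (m u x))))" using x y uC by (simp add: xx' yy')
    also have "\<dots> = m y (m (m u (m x (m y u))) x)" using x y uC by simp
    finally show ?thesis using u2' by simp
  qed
  have uv: "m y (m u x) = u" using inv_uniq[OF zC vC uC v1 v2] u1 u2 x y uC by simp
  have uu: "m u u = u"
  proof -
    have "m u u = m (m y (m u x)) (m y (m u x))" using uv by simp
    also have "\<dots> = m y (m (m u (m x (m y u))) x)" using x y uC by simp
    also have "\<dots> = u" using u2' uv by simp
    finally show ?thesis .
  qed
  have uu': "m u (m u w) = m u w" if "w\<in>C" for w using that uu uC by (metis assoc)
  have "m x y = u"
    apply (rule inv_uniq[OF uC zC uC])
    using u1 u2 uu x y uC by (simp_all add: uu')
  then show ?thesis using uu by simp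
qed

lemma idem_comm:
  assumes e: "e\<in>C" and f: "f\<in>C" and ee: "m e e = e" and ff: "m f f = f"
  shows "m e f = m f e"
proof -
  have ee': "m e (m e x) = m e x" if "x\<in>C" for x using that ee e by (metis assoc)
  have ff': "m f (m f x) = m f x" if "x\<in>C" for x using that ff f by (metis assoc)
  have z1: "m (m e f) (m e f) = m e f" using idem_prod e f ee ff by blast
  have z2: "m (m f e) (m f e) = m f e" using idem_prod e f ee ff by blast
  have z1': "m e (m f (m e (m f w))) = m e (m f w)" if "w\<in>C" for w using that z1 e f by (metis assoc closed)
  have z2': "m f (m e (m f (m e w))) = m f (m e w)" if "w\<in>C" for w using that z2 e f by (metis assoc closed)
  show ?thesis
    apply (rule inv_uniq[of "m e f"])
    using e f z1 z2 apply simp_all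
    using e f by (simp_all add: ee' ff' z1' z2')
qed
end



lemma isg_local:
  assumes LI: "locally_inverse TYPE('a::semigroup_mult)" and u: "idem (u::'a)"
  shows "isg (local_submonoid u) (*)"
proof -
  have I: "inverse_subsg (local_submonoid u)" using LI u unfolding locally_inverse_def by blast
  show ?thesis
    apply unfold_locales
    using I unfolding inverse_subsg_def is_inverse_def by (auto simp: mult.assoc)
qed

lemma loc_mem: "idem u \<Longrightarrow> u * x = x \<Longrightarrow> x * u = x \<Longrightarrow> x \<in> local_submonoid u"
  unfolding local_submonoid_def by (rule CollectI, rule exI[of _ x]) (simp add: mult.assoc)

lemma loc_comm:
  assumes LI: "locally_inverse TYPE('a::semigroup_mult)" and u: "idem (u::'a)"
   and "u * x = x" "x * u = x" "u * y = y" "y * u = y" "idem x" "idem y"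
  shows "x * y = y * x"
proof -
  interpret isg "local_submonoid u" "(*)" using isg_local[OF LI u] .
  show ?thesis using assms loc_mem[OF u] idem_comm unfolding idem_def by metis
qed



lemma sandwich_le:
  assumes LI: "locally_inverse TYPE('a::semigroup_mult)"
    and ie: "idem (e::'a)" and iF: "idem f" and ih: "idem h" and ik: "idem k"
    and he: "h*e = h" and fh: "f*h = h" and ehf: "e*h*f = e*f" and ke: "k*e = k" and fk: "f*k = k"
  shows "k*h = k \<and> h*k = k"
proof -
  have ee: "e*e = e" and ff: "f*f=f" and hh: "h*h = h" and kk: "k*k = k" using ie iF ih ik by (auto simp: idem_def)
  have c1: "(e*h)*(e*k) = (e*k)*(e*h)"
    apply (rule loc_comm[OF LI ie])
    using ee hh kk he ke unfolding idem_def by (metis mult.assoc)+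
  have c2: "(h*f)*(k*f) = (k*f)*(h*f)"
    apply (rule loc_comm[OF LI iF])
    using ff hh kk fh fk unfolding idem_def by (metis mult.assoc)+
  have khk: "k*h*k = k"
  proof -
    have "k = k*e*(f*k)" using kk ke fk by simp
    also have "\<dots> = k*(e*h*f)*k" using ehf by (simp add: mult.assoc)
    also have "\<dots> = (k*e)*h*(f*k)" by (simp add: mult.assoc)
    finally show ?thesis using ke fk by simp
  qed
  have "k*(e*h)*(e*k) = k*(e*k)*(e*h)" using c1 by (simp add: mult.assoc)
  hence "(k*e)*(h*e)*k = (k*e)*(k*e)*h" by (simp add: mult.assoc)
  hence 1: "k*h = k" using ke he kk khk by (simp add: mult.assoc)
  have "(h*f)*(k*f)*k = (k*f)*(h*f)*k" using c2 by simp
  hence "h*(f*k)*(f*k) = k*(f*h)*(f*k)" by (simp add: mult.assoc)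
  hence "h*k = k" using fk fh kk khk by (simp add: mult.assoc)
  with 1 show ?thesis by simp
qed



lemma primitive:
  assumes cs: "completely_simple_subsg A" and fA: "f\<in>A" and gA: "g\<in>A"
    and iF: "idem f" and ig: "idem g" and fg: "f*g = g" and gf: "g*f = g"
  shows "g = f"
proof -
  have cl: "\<And>x y. x\<in>A \<Longrightarrow> y\<in>A \<Longrightarrow> x*y \<in> A"
    using cs unfolding completely_simple_subsg_def by blast
  have simple: "\<And>I. I \<subseteq> A \<Longrightarrow> I \<noteq> {} \<Longrightarrow> (\<forall>x\<in>A. \<forall>i\<in>I. x * i \<in> I \<and> i * x \<in> I) \<Longrightarrow> I = A"
  proof -
    fix I assume "I \<subseteq> A" "I \<noteq> {}" "\<forall>x\<in>A. \<forall>i\<in>I. x * i \<in> I \<and> i * x \<in> I"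
    moreover have "\<forall>I. I \<subseteq> A \<and> I \<noteq> {} \<and> (\<forall>x\<in>A. \<forall>i\<in>I. x * i \<in> I \<and> i * x \<in> I) \<longrightarrow> I = A"
      using cs unfolding completely_simple_subsg_def by (elim conjE)
    ultimately show "I = A" by blast
  qed
  from cs obtain e where eA: "e\<in>A" and ie: "idem e"
    and prim: "\<And>f. f\<in>A \<Longrightarrow> idem f \<Longrightarrow> f*e = f \<Longrightarrow> e*f = f \<Longrightarrow> f = e"
    unfolding completely_simple_subsg_def by (elim conjE bexE) blast
  have ee: "e*e = e" and ff: "f*f = f" and gg: "g*g = g" using ie iF ig by (auto simp: idem_def)
  let ?I = "{x*e*y | x y. x\<in>A \<and> y\<in>A}"
  have "?I = A"
  proof (rule simple)
    show "?I \<subseteq> A" using cl eA by auto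
    show "?I \<noteq> {}" using eA by blast
    show "\<forall>x\<in>A. \<forall>i\<in>?I. x * i \<in> ?I \<and> i * x \<in> ?I"
    proof (intro ballI)
      fix x i assume xA: "x\<in>A" and "i\<in>?I"
      then obtain p q where i: "i = p*e*q" and pA: "p\<in>A" and qA: "q\<in>A" by blast
      have "x*i = (x*p)*e*q" "i*x = p*e*(q*x)" using i by (simp_all add: mult.assoc)
      then show "x * i \<in> ?I \<and> i * x \<in> ?I" using cl[OF xA pA] cl[OF qA xA] pA qA by auto
    qed
  qed
  with fA obtain x y where xA: "x\<in>A" and yA: "y\<in>A" and fxy: "f = x*e*y" by blast
  define p where "p = f*x*e"
  define q where "q = e*y*f"
  have pq: "p*q = f"
  proof -
    have "p*q = f*(x*(e*e)*y)*f" unfolding p_def q_def by (simp add: mult.assoc)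
    also have "\<dots> = f" using fxy[symmetric] ee ff by simp
    finally show ?thesis .
  qed
  have pe: "p*e = p" unfolding p_def using ee by (simp add: mult.assoc)
  have eq: "e*q = q" unfolding q_def using ee by (simp add: mult.assoc[symmetric])
  have qg: "q*g = q*g" ..
  define w where "w = q*g*p"
  have wA: "w\<in>A" unfolding w_def p_def q_def by (intro cl eA fA gA xA yA)
  have gfg: "g*f*g = g" using gf gg by simp
  have iw: "idem w" unfolding idem_def w_def
  proof -
    have "q*g*p*(q*g*p) = q*g*(p*q)*g*p" by (simp add: mult.assoc)
    also have "\<dots> = q*g*p" using pq gfg by (simp add: mult.assoc)
    finally show "q*g*p*(q*g*p) = q*g*p" .
  qed
  have "w*e = w" "e*w = w" unfolding w_def using pe eq by (simp_all add: mult.assoc, metis mult.assoc)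
  hence we: "w = e" using prim wA iw by blast
  have "g = f*g*f" using fg gf by simp
  also have "\<dots> = (p*q)*g*(p*q)" using pq by simp
  also have "\<dots> = p*w*q" unfolding w_def by (simp add: mult.assoc)
  also have "\<dots> = f" using we pe pq by simp
  finally show ?thesis .
qed




definition sinv :: "'a::semigroup_mult \<Rightarrow> 'a" where "sinv x = (SOME y. is_inverse y x)"

lemma LI_reg: "locally_inverse TYPE('a::semigroup_mult) \<Longrightarrow> regular_sg TYPE('a)"
  unfolding locally_inverse_def by simp

lemma sinv: assumes "regular_sg TYPE('a::semigroup_mult)"
  shows "(x::'a) * sinv x * x = x" "sinv x * x * sinv x = sinv x"
proof -
  have "is_inverse (sinv x) x" unfolding sinv_def using assms unfolding regular_sg_def by (metis someI_ex)
  then show "(x::'a) * sinv x * x = x" "sinv x * x * sinv x = sinv x" unfolding is_inverse_def by auto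
qed

lemma mitsch:
  assumes R: "regular_sg TYPE('a::semigroup_mult)"
    and 1: "(x::'a) = u*z" and 2: "x = z*v" and 3: "u*x = x"
  shows "nat_le x z"
proof -
  let ?x = "sinv x"
  have xx: "x * ?x * x = x" using sinv[OF R] by simp
  have xv: "x*v = x" using 1 2 3 by (simp add: mult.assoc)
  let ?E = "x*?x*u" and ?F = "v*?x*x"
  have "?E*z = x" using 1 xx by (simp add: mult.assoc)
  moreover have "z*?F = x" using 2 xx by (simp add: mult.assoc[symmetric])
  moreover have "?E*?E = ?E"
  proof -
    have "?E*?E = x*?x*(u*x)*?x*u" by (simp add: mult.assoc)
    also have "\<dots> = ?E" using 3 xx by simp
    finally show ?thesis .
  qed
  moreover have "?F*?F = ?F"
  proof -
    have "?F*?F = v*?x*(x*v)*?x*x" by (simp add: mult.assoc)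
    also have "\<dots> = ?F" using xv xx by (simp add: mult.assoc)
    finally show ?thesis .
  qed
  ultimately show ?thesis unfolding nat_le_def idem_def by metis
qed

lemma nat_le_mitsch: "nat_le x z \<Longrightarrow> \<exists>u v. x = u*z \<and> x = z*v \<and> u*x = x"
  unfolding nat_le_def idem_def by (metis mult.assoc)

lemma nat_le_refl: "regular_sg TYPE('a::semigroup_mult) \<Longrightarrow> nat_le (x::'a) x"
  using mitsch[of x "x * sinv x" x "sinv x * x"] sinv[of x] by (simp add: mult.assoc)

lemma nat_le_trans:
  assumes R: "regular_sg TYPE('a::semigroup_mult)" and "nat_le (x::'a) y" "nat_le y z"
  shows "nat_le x z"
proof -
  obtain u v where 1: "x = u*y" "x = y*v" "u*x = x" using nat_le_mitsch assms(2) by blast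
  obtain u2 v2 where 2: "y = u2*z" "y = z*v2" "u2*y = y" using nat_le_mitsch assms(3) by blast
  show ?thesis
  proof (rule mitsch[OF R, of x "u*u2" z "v2*v"])
    show "x = u * u2 * z" using 1 2 by (simp add: mult.assoc)
    show "x = z * (v2 * v)" using 1 2 by (simp add: mult.assoc[symmetric])
    show "u * u2 * x = x" using 1 2 by (metis mult.assoc)
  qed
qed

lemma nat_le_factor:
  assumes "nat_le t s" and "s * s' * s = (s::'a::semigroup_mult)"
  shows "s*s'*t = t" "t*s'*s = t"
proof -
  obtain e f where e: "e*e = e" "t = e*s" and f: "f*f = f" "t = s*f" using assms(1) unfolding nat_le_def idem_def by blast
  show "s*s'*t = t" using f(2) assms(2) by (metis mult.assoc)
  show "t*s'*s = t" using e(2) assms(2) by (metis mult.assoc)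
qed

lemma nat_le_rcomp:
  assumes LI: "locally_inverse TYPE('a::semigroup_mult)" and le: "nat_le (x::'a) y"
  shows "nat_le (x*z) (y*z)"
proof -
  have R: "regular_sg TYPE('a)" using LI_reg[OF LI] .
  let ?y = "sinv y"
  have yy: "y*?y*y = y" using sinv[OF R] by simp
  obtain f where f: "f*f = f" "x = y*f" using le unfolding nat_le_def idem_def by blast
  have f1: "y*?y*x = x" and f2: "x*?y*y = x" using nat_le_factor[OF le yy] by auto
  have xyx: "x*?y*x = x"
  proof -
    have "x*?y*x = (x*?y*y)*f" using f(2) by (simp add: mult.assoc)
    also have "\<dots> = x" using f f2 by (simp add: mult.assoc)
    finally show ?thesis .
  qed
  define e where "e = x*?y"
  define u where "u = y*?y"
  have uu: "u*u = u" unfolding u_def using yy by (metis mult.assoc)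
  have ee: "e*e = e" unfolding e_def using xyx by (metis mult.assoc)
  have ue: "u*e = e" unfolding u_def e_def using f1 by (metis mult.assoc)
  have eu: "e*u = e" unfolding u_def e_def using f2 by (metis mult.assoc)
  define w where "w = y*z"
  let ?w = "sinv w"
  have ww: "w*?w*w = w" using sinv[OF R] by simp
  define r where "r = w*?w"
  have rr: "r*r = r" unfolding r_def using ww by (metis mult.assoc)
  have rw: "r*w = w" unfolding r_def using ww by simp
  have ur: "u*r = r" unfolding u_def r_def w_def using yy by (metis mult.assoc)
  define r' where "r' = r*u"
  have r'r': "r'*r' = r'" unfolding r'_def using ur rr by (metis mult.assoc)
  have ur': "u*r' = r'" unfolding r'_def using ur by (metis mult.assoc)
  have r'u: "r'*u = r'" unfolding r'_def using uu by (metis mult.assoc)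
  have com: "e*r' = r'*e"
    apply (rule loc_comm[OF LI])
    using uu ue eu ur' r'u ee r'r' unfolding idem_def by auto
  have re: "r*e = r'*e" unfolding r'_def using ue by (metis mult.assoc)
  have r'r: "r'*r = r" unfolding r'_def using ur rr by (metis mult.assoc)
  define E where "E = e*r"
  have EE: "E*E = E"
  proof -
    have "E*E = e*(r*e)*r" unfolding E_def by (simp add: mult.assoc)
    also have "\<dots> = (e*e)*(r'*r)" using re com by (metis mult.assoc)
    also have "\<dots> = E" unfolding E_def using ee r'r by simp
    finally show ?thesis .
  qed
  have Ew: "E*w = x*z" unfolding E_def e_def w_def using rw f2 unfolding w_def by (metis mult.assoc)
  have rE: "r*E = E" unfolding E_def using re com r'r by (metis mult.assoc)
  show ?thesis
  proof (rule mitsch[OF R, of "x*z" E "y*z" "?w*E*w"])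
    show "x * z = E * (y * z)" using Ew w_def by simp
    show "x * z = y * z * (?w * E * w)" using rE Ew unfolding r_def w_def by (metis mult.assoc)
    show "E * (x * z) = x * z" using EE Ew by (metis mult.assoc)
  qed
qed

lemma nat_le_lcomp:
  assumes LI: "locally_inverse TYPE('a::semigroup_mult)" and le: "nat_le (x::'a) y"
  shows "nat_le (z*x) (z*y)"
proof -
  have R: "regular_sg TYPE('a)" using LI_reg[OF LI] .
  let ?y = "sinv y"
  have yy: "y*?y*y = y" using sinv[OF R] by simp
  obtain f0 where f0: "f0*f0 = f0" "x = f0*y" using le unfolding nat_le_def idem_def by blast
  have f1: "y*?y*x = x" and f2: "x*?y*y = x" using nat_le_factor[OF le yy] by auto
  have xyx: "x*?y*x = x"
  proof -
    have "x*?y*x = f0*(y*?y*x)" using f0(2) by (simp add: mult.assoc)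
    also have "\<dots> = x" using f0 f1 by (metis mult.assoc)
    finally show ?thesis .
  qed
  define e where "e = ?y*x"
  define u where "u = ?y*y"
  have uu: "u*u = u" unfolding u_def using yy by (metis mult.assoc)
  have ee: "e*e = e" unfolding e_def using xyx by (metis mult.assoc)
  have ue: "u*e = e" unfolding u_def e_def using f1 by (metis mult.assoc)
  have eu: "e*u = e" unfolding u_def e_def using f2 by (metis mult.assoc)
  have ye: "y*e = x" unfolding e_def using f1 by (metis mult.assoc)
  define w where "w = z*y"
  let ?w = "sinv w"
  have ww: "w*?w*w = w" using sinv[OF R] by simp
  define l where "l = ?w*w"
  have ll: "l*l = l" unfolding l_def using ww by (metis mult.assoc)
  have wl: "w*l = w" unfolding l_def using ww by (metis mult.assoc)
  have lu: "l*u = l" unfolding u_def l_def w_def using yy by (metis mult.assoc)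
  define l' where "l' = u*l"
  have l'l': "l'*l' = l'" unfolding l'_def using lu ll by (metis mult.assoc)
  have ul': "u*l' = l'" unfolding l'_def using uu by (metis mult.assoc)
  have l'u: "l'*u = l'" unfolding l'_def using lu by (metis mult.assoc)
  have com: "e*l' = l'*e"
    apply (rule loc_comm[OF LI])
    using uu ue eu ul' l'u ee l'l' unfolding idem_def by auto
  have el: "e*l = e*l'" unfolding l'_def using eu by (metis mult.assoc)
  have ll': "l*l' = l" unfolding l'_def using lu ll by (metis mult.assoc)
  define F where "F = l*e"
  have FF: "F*F = F"
  proof -
    have "F*F = l*(e*l)*e" unfolding F_def by (simp add: mult.assoc)
    also have "\<dots> = (l*l')*(e*e)" using el com by (metis mult.assoc)
    also have "\<dots> = F" unfolding F_def using ee ll' by simp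
    finally show ?thesis .
  qed
  have wF: "w*F = z*x" unfolding F_def w_def using wl ye unfolding w_def by (metis mult.assoc)
  have Fl: "F*l = F" unfolding F_def using el com ll' by (metis mult.assoc)
  show ?thesis
  proof (rule mitsch[OF R, of "z*x" "w*F*?w" "z*y" F])
    show "z * x = w * F * ?w * (z * y)" using Fl wF unfolding l_def w_def by (metis mult.assoc)
    show "z * x = z * y * F" using wF w_def by simp
    show "w * F * ?w * (z * x) = z * x" using FF wF Fl unfolding l_def by (metis mult.assoc)
  qed
qed




context isg begin

definition inv where "inv x = (THE y. y\<in>C \<and> m (m x y) x = x \<and> m (m y x) y = y)"

lemma inv_prop: assumes "x\<in>C" shows "inv x \<in> C" "m x (m (inv x) x) = x" "m (inv x) (m x (inv x)) = inv x"
proof -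
  have "inv x\<in>C \<and> m (m x (inv x)) x = x \<and> m (m (inv x) x) (inv x) = inv x"
    unfolding inv_def by (rule theI'[OF uinv[OF assms]])
  then show "inv x \<in> C" "m x (m (inv x) x) = x" "m (inv x) (m x (inv x)) = inv x" using assms by auto
qed

lemma inv_C[simp]: "x\<in>C \<Longrightarrow> inv x \<in> C" using inv_prop by blast

lemma inv_eq: "x\<in>C \<Longrightarrow> y\<in>C \<Longrightarrow> m x (m y x) = x \<Longrightarrow> m y (m x y) = y \<Longrightarrow> inv x = y"
  using inv_uniq[of x "inv x" y] inv_prop[of x] by auto

lemma inv_l[simp]: "x\<in>C \<Longrightarrow> m x (m (inv x) x) = x" using inv_prop by blast
lemma inv_r[simp]: "x\<in>C \<Longrightarrow> m (inv x) (m x (inv x)) = inv x" using inv_prop by blast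
lemma inv_l'[simp]: "x\<in>C \<Longrightarrow> w\<in>C \<Longrightarrow> m x (m (inv x) (m x w)) = m x w"
proof -
  assume a: "x\<in>C" "w\<in>C"
  have "m x (m (inv x) (m x w)) = m (m x (m (inv x) x)) w" using a by (simp del: inv_l)
  also have "\<dots> = m x w" using a by simp
  finally show ?thesis .
qed
lemma inv_r'[simp]: "x\<in>C \<Longrightarrow> w\<in>C \<Longrightarrow> m (inv x) (m x (m (inv x) w)) = m (inv x) w"
proof -
  assume a: "x\<in>C" "w\<in>C"
  have "m (inv x) (m x (m (inv x) w)) = m (m (inv x) (m x (inv x))) w" using a by (simp del: inv_r)
  also have "\<dots> = m (inv x) w" using a by simp
  finally show ?thesis .
qed

lemma inv_inv[simp]: "x\<in>C \<Longrightarrow> inv (inv x) = x"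
  by (rule inv_eq) auto

lemma idem_inv: "e\<in>C \<Longrightarrow> m e e = e \<Longrightarrow> inv e = e"
  by (rule inv_eq) auto

lemma comm_xinv: "x\<in>C \<Longrightarrow> y\<in>C \<Longrightarrow> m (m x (inv x)) (m y (inv y)) = m (m y (inv y)) (m x (inv x))"
  by (rule idem_comm) auto

lemma comm_invx: "x\<in>C \<Longrightarrow> y\<in>C \<Longrightarrow> m (m (inv x) x) (m y (inv y)) = m (m y (inv y)) (m (inv x) x)"
  by (rule idem_comm) auto

lemma inv_mult: assumes x: "x\<in>C" and y: "y\<in>C" shows "inv (m x y) = m (inv y) (inv x)"
proof (rule inv_eq)
  have c: "m (m (inv x) x) (m y (inv y)) = m (m y (inv y)) (m (inv x) x)"
    using comm_invx x y by blast
  have c': "m (inv x) (m x (m y (m (inv y) w))) = m y (m (inv y) (m (inv x) (m x w)))" if "w\<in>C" for w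
  proof -
    have "m (inv x) (m x (m y (m (inv y) w))) = m (m (m (inv x) x) (m y (inv y))) w" using that x y by simp
    also have "\<dots> = m (m (m y (inv y)) (m (inv x) x)) w" by (simp only: c)
    also have "\<dots> = m y (m (inv y) (m (inv x) (m x w)))" using that x y by simp
    finally show ?thesis .
  qed
  show "m (m x y) (m (m (inv y) (inv x)) (m x y)) = m x y"
    using x y c'[symmetric] by simp
  show "m (m (inv y) (inv x)) (m (m x y) (m (inv y) (inv x))) = m (inv y) (inv x)"
    using x y c' by simp
qed (use x y in auto)

end



locale setting =
  fixes \<rho> :: "'a::semigroup_mult \<Rightarrow> 'a \<Rightarrow> bool"
  assumes LI: "locally_inverse TYPE('a)" and IC: "inverse_congruence \<rho>"
    and CS: "\<forall>e. tmul \<rho> (cls \<rho> e) (cls \<rho> e) = cls \<rho> e \<longrightarrow> completely_simple_subsg (cls \<rho> e)"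
begin

abbreviation c where "c \<equiv> cls \<rho>"

lemma R: "regular_sg TYPE('a)" using LI_reg[OF LI] .
lemma congr: "congruence \<rho>" using IC unfolding inverse_congruence_def by blast
lemma eqv: "equivp \<rho>" using congr unfolding congruence_def by blast
lemma cls_eq: "c x = c y \<longleftrightarrow> \<rho> x y"
  using eqv unfolding cls_def equivp_def by (metis Collect_cong mem_Collect_eq)
lemma cls_mem: "y \<in> c x \<longleftrightarrow> \<rho> x y" unfolding cls_def by simp
lemma cls_refl: "x \<in> c x" using eqv cls_mem equivp_reflp by metis

lemma tmul_cls[simp]: "tmul \<rho> (c x) (c y) = c (x*y)"
proof -
  have cg: "\<And>x y z. \<rho> x y \<Longrightarrow> \<rho> (z * x) (z * y) \<and> \<rho> (x * z) (y * z)" using congr unfolding congruence_def by blast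
  have tr: "\<And>x y z. \<rho> x y \<Longrightarrow> \<rho> y z \<Longrightarrow> \<rho> x z" using eqv by (meson equivp_transp)
  have sy: "\<And>x y. \<rho> x y \<Longrightarrow> \<rho> y x" using eqv by (meson equivp_symp)
  have rf: "\<And>x. \<rho> x x" using eqv by (meson equivp_reflp)
  show ?thesis
  proof (rule set_eqI)
    fix z
    show "z \<in> tmul \<rho> (c x) (c y) \<longleftrightarrow> z \<in> c (x*y)"
    proof
      assume "z \<in> tmul \<rho> (c x) (c y)"
      then obtain x1 y1 where "\<rho> x x1" "\<rho> y y1" "\<rho> (x1*y1) z" unfolding tmul_def cls_def by blast
      then have "\<rho> (x*y) (x1*y) " "\<rho> (x1*y) (x1*y1)" using cg by blast+
      then show "z \<in> c (x*y)" unfolding cls_def using tr \<open>\<rho> (x1*y1) z\<close> by blast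
    next
      assume "z \<in> c (x*y)"
      then show "z \<in> tmul \<rho> (c x) (c y)" unfolding tmul_def cls_def using rf by blast
    qed
  qed
qed

lemma quot_cls[simp]: "c x \<in> quot \<rho>" unfolding quot_def by simp
lemma quot_E: "A \<in> quot \<rho> \<Longrightarrow> (\<And>x. A = c x \<Longrightarrow> P) \<Longrightarrow> P" unfolding quot_def by blast

sublocale T: isg "quot \<rho>" "tmul \<rho>"
proof
  fix x y z assume x: "x\<in>quot \<rho>" and y: "y\<in>quot \<rho>"
  show "tmul \<rho> x y \<in> quot \<rho>" using x y by (elim quot_E) simp
  assume z: "z\<in>quot \<rho>"
  show "tmul \<rho> (tmul \<rho> x y) z = tmul \<rho> x (tmul \<rho> y z)" using x y z by (elim quot_E) (simp add: mult.assoc)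
next
  fix x assume x: "x\<in>quot \<rho>"
  have "\<forall>A\<in>quot \<rho>. \<exists>!B. B \<in> quot \<rho> \<and> tinverse \<rho> B A" using IC unfolding inverse_congruence_def by (rule conjunct2)
  then show "\<exists>!y. y \<in> quot \<rho> \<and> tmul \<rho> (tmul \<rho> x y) x = x \<and> tmul \<rho> (tmul \<rho> y x) y = y"
    using x unfolding tinverse_def by (rule bspec)
qed

lemma tinv_T: "tinv \<rho> = T.inv"
  unfolding tinv_def T.inv_def tinverse_def by (rule ext) simp

lemma tinv_cls[simp]: "T.inv (c x) = c (sinv x)"
proof (rule T.inv_eq)
  show "tmul \<rho> (c x) (tmul \<rho> (c (sinv x)) (c x)) = c x" using sinv(1)[OF R, of x] by (simp add: mult.assoc)
  show "tmul \<rho> (c (sinv x)) (tmul \<rho> (c x) (c (sinv x))) = c (sinv x)" using sinv(2)[OF R, of x] by (simp add: mult.assoc)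
qed auto

lemma Tinv_of_inverse: "x*y*x = x \<Longrightarrow> y*x*y = y \<Longrightarrow> T.inv (c x) = c y"
  by (rule T.inv_eq) (auto simp: mult.assoc)

lemma below_same_class:
  assumes le1: "nat_le t1 s" and le2: "nat_le t2 s" and cc: "c t1 = c t2"
  shows "t1 = t2"
proof -
  let ?s = "sinv s"
  have ss: "s * ?s * s = s" using sinv[OF R] by simp
  define u where "u = s * ?s"
  have uu: "u*u = u" unfolding u_def using ss by (metis mult.assoc)
  have gen: "\<And>t. nat_le t s \<Longrightarrow> (t*?s)*(t*?s) = t*?s \<and> u*(t*?s) = t*?s \<and> (t*?s)*u = t*?s \<and> (t*?s)*s = t"
  proof -
    fix t assume le: "nat_le t s"
    have f1: "s*?s*t = t" and f2: "t*?s*s = t" using nat_le_factor[OF le ss] by auto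
    obtain f where f: "f*f = f" "t = s*f" using le unfolding nat_le_def idem_def by blast
    have tst: "t*?s*t = t"
    proof -
      have "t*?s*t = (t*?s*s)*f" using f(2) by (simp add: mult.assoc)
      also have "\<dots> = t" using f f2 by (metis mult.assoc)
      finally show ?thesis .
    qed
    show "(t*?s)*(t*?s) = t*?s \<and> u*(t*?s) = t*?s \<and> (t*?s)*u = t*?s \<and> (t*?s)*s = t"
      unfolding u_def using tst f1 f2 by (metis mult.assoc)
  qed
  define e1 where "e1 = t1*?s"
  define e2 where "e2 = t2*?s"
  have E1: "e1*e1 = e1" "u*e1 = e1" "e1*u = e1" "e1*s = t1" using gen[OF le1] unfolding e1_def by auto
  have E2: "e2*e2 = e2" "u*e2 = e2" "e2*u = e2" "e2*s = t2" using gen[OF le2] unfolding e2_def by auto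
  have com: "e1*e2 = e2*e1"
    by (rule loc_comm[OF LI, of u]) (use uu E1 E2 in \<open>auto simp: idem_def\<close>)
  have ce: "c e1 = c e2" unfolding e1_def e2_def using cc tmul_cls by metis
  define K where "K = c e1"
  have KK: "tmul \<rho> K K = K" unfolding K_def using E1 by simp
  have csK: "completely_simple_subsg K" using CS KK unfolding K_def by blast
  define p where "p = e1*e2"
  have pK: "p \<in> K"
  proof -
    have "c p = tmul \<rho> (c e1) (c e2)" unfolding p_def by simp
    also have "\<dots> = tmul \<rho> K K" by (simp only: ce[symmetric] K_def)
    finally have "c p = tmul \<rho> K K" .
    then have "c p = c e1" using KK K_def by simp
    then show ?thesis unfolding K_def using cls_refl[of p] by simp
  qed
  have pp: "idem p" unfolding idem_def p_def using com E1 E2 by (metis mult.assoc)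
  have e1K: "e1 \<in> K" unfolding K_def using cls_refl .
  have e2K: "e2 \<in> K" unfolding K_def using ce cls_refl[of e2] by simp
  have pp': "p*p = p" using pp unfolding idem_def .
  have ie1: "idem e1" and ie2: "idem e2" using E1 E2 unfolding idem_def by auto
  have a1: "e1*p = p" unfolding p_def using E1 by (metis mult.assoc)
  have a2: "p*e1 = p" unfolding p_def using E1 com by (metis mult.assoc)
  have a3: "e2*p = p" unfolding p_def using E2 com by (metis mult.assoc)
  have a4: "p*e2 = p" unfolding p_def using E2 by (metis mult.assoc)
  have "p = e1" by (rule primitive[OF csK e1K pK ie1 pp a1 a2])
  moreover have "p = e2" by (rule primitive[OF csK e2K pK ie2 pp a3 a4])
  ultimately show ?thesis using E1 E2 by metis
qed

end



context setting begin

abbreviation m where "m \<equiv> tmul \<rho>"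
abbreviation i where "i \<equiv> T.inv"

lemma is_arrow_iff: "is_arrow \<rho> (A,s,B) \<longleftrightarrow> A \<in> quot \<rho> \<and> B \<in> quot \<rho> \<and> m A (c s) = B \<and> m B (i (c s)) = A"
  unfolding is_arrow_def tinv_T by simp

lemma stable_iff: "stable \<rho> (A,t,B) \<longleftrightarrow> c t = m (i A) B"
  unfolding stable_def tinv_T lbl_def dom_a_def cod_a_def by simp

lemma arrow_le_iff: "arrow_le (A,t,B) (A',s,B') \<longleftrightarrow> A = A' \<and> B = B' \<and> nat_le t s"
  unfolding arrow_le_def lbl_def dom_a_def cod_a_def by simp

lemma arrow_cases: "is_arrow \<rho> a \<Longrightarrow> (\<And>A s B. a = (A,s,B) \<Longrightarrow> A \<in> quot \<rho> \<Longrightarrow> B \<in> quot \<rho> \<Longrightarrow> m A (c s) = B \<Longrightarrow> m B (i (c s)) = A \<Longrightarrow> P) \<Longrightarrow> P"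
  by (cases a) (auto simp: is_arrow_iff)

lemma sinv_simps[simp]: "(x::'a) * (sinv x * x) = x" "(x::'a) * (sinv x * (x*w)) = x*w"
  "sinv (x::'a) * (x * sinv x) = sinv x" "sinv (x::'a) * (x * (sinv x * w)) = sinv x * w"
  using sinv[OF R, of x] by (metis mult.assoc)+

definition P where "P a b \<longleftrightarrow> is_arrow \<rho> b \<and> stable \<rho> b \<and> arrow_le b a"

lemma hat_unique:
  assumes "is_arrow \<rho> a" "P a b1" "P a b2" shows "b1 = b2"
proof -
  obtain A s B where a: "a = (A,s,B)" by (cases a) auto
  obtain A1 t1 B1 where b1: "b1 = (A1,t1,B1)" by (cases b1) auto
  obtain A2 t2 B2 where b2: "b2 = (A2,t2,B2)" by (cases b2) auto
  have 1: "A1 = A" "B1 = B" "nat_le t1 s" "c t1 = m (i A1) B1" using assms(2) unfolding P_def a b1 arrow_le_iff stable_iff by auto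
  have 2: "A2 = A" "B2 = B" "nat_le t2 s" "c t2 = m (i A2) B2" using assms(3) unfolding P_def a b2 arrow_le_iff stable_iff by auto
  have "t1 = t2" using below_same_class[OF 1(3) 2(3)] 1 2 by simp
  then show ?thesis using 1 2 b1 b2 by simp
qed

lemma hat_exists:
  assumes ar: "is_arrow \<rho> a" shows "\<exists>b. P a b"
proof -
  obtain A s B where a: "a = (A,s,B)" and AQ: "A \<in> quot \<rho>" and BQ: "B \<in> quot \<rho>"
    and AB: "m A (c s) = B" and BA: "m B (i (c s)) = A" using ar by (rule arrow_cases) blast
  obtain a0 where A: "A = c a0" using AQ by (rule quot_E)
  let ?s = "sinv s"
  define u where "u = s * ?s"
  define q where "q = sinv a0 * a0"
  define x where "x = u*q*u"
  have ss: "s*?s*s = s" using sinv[OF R] by simp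
  have uu: "u*u = u" unfolding u_def using ss by (metis mult.assoc)
  have iu: "idem u" using uu unfolding idem_def .
  have xL: "x \<in> local_submonoid u" unfolding x_def local_submonoid_def by blast
  have "inverse_subsg (local_submonoid u)" using LI iu unfolding locally_inverse_def by blast
  then obtain x' where x'L: "x' \<in> local_submonoid u" and xinv: "is_inverse x' x"
    unfolding inverse_subsg_def using xL by blast
  have x1: "x*x'*x = x" and x2: "x'*x*x' = x'" using xinv unfolding is_inverse_def by auto
  define e0 where "e0 = x*x'"
  have ux: "u*x = x" unfolding x_def using uu by (metis mult.assoc)
  have ue0: "u*e0 = e0" unfolding e0_def using ux by (metis mult.assoc)
  have e0e0: "e0*e0 = e0" unfolding e0_def using x1 by (metis mult.assoc)
  define t where "t = e0*s"
  define \<sigma> where "\<sigma> = c s"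
  have \<sigma>Q: "\<sigma> \<in> quot \<rho>" unfolding \<sigma>_def by simp
  have cu: "c u = m \<sigma> (i \<sigma>)" unfolding u_def \<sigma>_def by simp
  have cq: "c q = m (i A) A" unfolding q_def A by simp
  have com: "m (c q) (c u) = m (c u) (c q)" unfolding cu cq using T.comm_invx[OF AQ \<sigma>Q] .
  have UU: "m (c u) (c u) = c u" using uu by simp
  have QQ: "m (c q) (c q) = c q" unfolding cq using AQ by simp
  have cx: "c x = m (c q) (c u)"
  proof -
    have "c x = m (m (c u) (c q)) (c u)" unfolding x_def by simp
    also have "\<dots> = m (c q) (m (c u) (c u))" unfolding com[symmetric] by (simp add: mult.assoc)
    also have "\<dots> = m (c q) (c u)" using UU by simp
    finally show ?thesis .
  qed
  have XX: "m (c x) (c x) = c x"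
    using T.idem_prod[of "c q" "c u"] QQ UU cx by simp
  have cx': "c x' = c x"
  proof -
    have "c x' = i (c x)" using Tinv_of_inverse[OF x1 x2] by simp
    also have "\<dots> = c x" using T.idem_inv[OF quot_cls XX] .
    finally show ?thesis .
  qed
  have ce0: "c e0 = c x"
  proof -
    have "c e0 = m (c x) (c x')" unfolding e0_def by simp
    also have "\<dots> = c x" unfolding cx' using XX .
    finally show ?thesis .
  qed
  have ct: "c t = m (i A) B"
  proof -
    have "c t = m (c e0) \<sigma>" unfolding t_def \<sigma>_def by simp
    also have "\<dots> = m (c x) \<sigma>" by (simp only: ce0)
    also have "\<dots> = m (i A) (m A \<sigma>)" unfolding cx cq cu A \<sigma>_def by (simp add: mult.assoc)
    finally show ?thesis using AB \<sigma>_def by simp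
  qed
  have st: "stable \<rho> (A,t,B)" unfolding stable_iff using ct .
  have arr: "is_arrow \<rho> (A,t,B)"
    unfolding is_arrow_iff
  proof (intro conjI AQ BQ)
    show "m A (c t) = B" unfolding ct AB[symmetric] using AQ \<sigma>Q \<sigma>_def by simp
    have "i (c t) = m (i B) A" unfolding ct using AQ BQ by (simp add: T.inv_mult)
    then show "m B (i (c t)) = A" unfolding BA[symmetric] using BQ by simp
  qed
  have le: "nat_le t s"
  proof (rule mitsch[OF R, of t e0 s "?s*e0*s"])
    show "t = e0*s" unfolding t_def ..
    show "t = s * (?s * e0 * s)" unfolding t_def using ue0 unfolding u_def by (metis mult.assoc)
    show "e0 * t = t" unfolding t_def using e0e0 by (metis mult.assoc)
  qed
  have "P a (A,t,B)" unfolding P_def a using st arr le by (simp add: arrow_le_iff)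
  then show ?thesis ..
qed

lemma hat_P: "is_arrow \<rho> a \<Longrightarrow> P a (hat \<rho> a)"
  unfolding hat_def P_def[symmetric]
  using hat_exists hat_unique by (metis theI)

lemma hat_eq: "is_arrow \<rho> a \<Longrightarrow> P a b \<Longrightarrow> hat \<rho> a = b"
  using hat_P hat_unique by blast

end



context setting begin

lemma c_mult: "c (x*y) = m (c x) (c y)" by simp
lemma c_sinv: "c (sinv x) = i (c x)" by simp

lemma claim1: assumes "is_arrow \<rho> a" shows "hat \<rho> (hat \<rho> a) = hat \<rho> a"
proof -
  have Pa: "P a (hat \<rho> a)" using hat_P[OF assms] .
  obtain A t B where hb: "hat \<rho> a = (A,t,B)" by (cases "hat \<rho> a") auto
  have "P (hat \<rho> a) (hat \<rho> a)" using Pa unfolding P_def hb by (simp add: arrow_le_iff nat_le_refl[OF R])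
  then show ?thesis using hat_eq Pa unfolding P_def by blast
qed

lemma comp_arrow:
  assumes "is_arrow \<rho> (A,s,B)" "is_arrow \<rho> (B,t,D)"
  shows "is_arrow \<rho> (A,s*t,D)"
proof -
  have A: "A \<in> quot \<rho>" "B \<in> quot \<rho>" "m A (c s) = B" "m B (i (c s)) = A" using assms(1) unfolding is_arrow_iff by auto
  have B: "D \<in> quot \<rho>" "m B (c t) = D" "m D (i (c t)) = B" using assms(2) unfolding is_arrow_iff by auto
  have 1: "m A (c (s*t)) = D"
  proof -
    have "m A (c (s*t)) = m (m A (c s)) (c t)" using A(1) by (simp del: tmul_cls add: c_mult)
    then show ?thesis using A B by simp
  qed
  have 2: "m D (i (c (s*t))) = A"
  proof -
    have "m D (i (c (s*t))) = m (m D (i (c t))) (i (c s))" using B(1)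
      by (simp del: tmul_cls tinv_cls add: c_mult T.inv_mult)
    also have "\<dots> = A" using A B by simp
    finally show ?thesis .
  qed
  show ?thesis unfolding is_arrow_iff using A B 1 2 by simp
qed

lemma claim2:
  assumes a: "is_arrow \<rho> a" and b: "is_arrow \<rho> b" and ab: "cod_a a = dom_a b"
  shows "hat \<rho> (comp_a a b) = comp_a (hat \<rho> a) (hat \<rho> b)"
proof -
  obtain A s B where ad: "a = (A,s,B)" by (cases a) auto
  obtain B' t D where bd: "b = (B',t,D)" by (cases b) auto
  have BB: "B' = B" using ab unfolding ad bd cod_a_def dom_a_def by simp
  note a' = a[unfolded ad] and b' = b[unfolded bd BB]
  have Pa: "P a (hat \<rho> a)" and Pb: "P b (hat \<rho> b)" using hat_P a b by auto
  obtain A1 s0 B1 where ha: "hat \<rho> a = (A1,s0,B1)" by (cases "hat \<rho> a") auto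
  obtain A2 t0 B2 where hb: "hat \<rho> b = (A2,t0,B2)" by (cases "hat \<rho> b") auto
  have 1: "A1 = A" "B1 = B" "nat_le s0 s" "c s0 = m (i A) B" "is_arrow \<rho> (A,s0,B)"
    using Pa[unfolded ha, unfolded ad] unfolding P_def arrow_le_iff stable_iff by auto
  have 2: "A2 = B" "B2 = D" "nat_le t0 t" "c t0 = m (i B) D" "is_arrow \<rho> (B,t0,D)"
    using Pb[unfolded hb, unfolded bd BB] unfolding P_def arrow_le_iff stable_iff by auto
  have AQ: "A \<in> quot \<rho>" "B \<in> quot \<rho>" "m A (c s) = B" using a' unfolding is_arrow_iff by auto
  have BQ: "D \<in> quot \<rho>" "m B (c t) = D" using b' unfolding is_arrow_iff by auto
  have comp: "comp_a a b = (A, s*t, D)" "comp_a (hat \<rho> a) (hat \<rho> b) = (A, s0*t0, D)"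
  proof -
    have ha': "hat \<rho> a = (A,s0,B)" using ha 1 by simp
    have hb': "hat \<rho> b = (B,t0,D)" using hb 2 by simp
    show "comp_a a b = (A, s*t, D)" by (simp add: ad bd comp_a_def dom_a_def cod_a_def lbl_def)
    show "comp_a (hat \<rho> a) (hat \<rho> b) = (A, s0*t0, D)" unfolding ha' hb' by (simp add: comp_a_def dom_a_def cod_a_def lbl_def)
  qed
  have arr: "is_arrow \<rho> (A, s*t, D)" using comp_arrow[OF a' b'] .
  have arr0: "is_arrow \<rho> (A, s0*t0, D)" using comp_arrow[OF 1(5) 2(5)] .
  have st: "c (s0*t0) = m (i A) D"
  proof -
    have "c (s0*t0) = m (c s0) (c t0)" by simp
    also have "\<dots> = m (m (i A) B) (m (i B) D)" by (simp only: 1(4) 2(4))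
    also have "\<dots> = m (i A) (m B (m (i B) D))" using AQ BQ by simp
    also have "\<dots> = m (i A) D" using T.inv_l'[of B "c t"] AQ BQ by simp
    finally show ?thesis .
  qed
  have le: "nat_le (s0*t0) (s*t)"
    using nat_le_trans[OF R nat_le_rcomp[OF LI 1(3)] nat_le_lcomp[OF LI 2(3)]] .
  have "P (comp_a a b) (comp_a (hat \<rho> a) (hat \<rho> b))"
    unfolding P_def comp using arr0 st le by (simp add: stable_iff arrow_le_iff)
  then show ?thesis using hat_eq arr comp by simp
qed

end



context setting begin

lemma arrow_inv_prop:
  assumes a: "is_arrow \<rho> (A,s,B)"
  shows "\<exists>s'. arrow_inv \<rho> (A,s,B) = (B,s',A) \<and> s*s'*s = s \<and> s'*s*s' = s'"
proof -
  have AQ: "A \<in> quot \<rho>" "B \<in> quot \<rho>" "m A (c s) = B" "m B (i (c s)) = A" using a unfolding is_arrow_iff by auto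
  have "arrow_inverse \<rho> (B, sinv s, A) (A,s,B)"
    unfolding arrow_inverse_def is_inverse_def dom_a_def cod_a_def lbl_def is_arrow_iff
    using AQ sinv[OF R, of s] Tinv_of_inverse[of "sinv s" s] by simp
  then have "arrow_inverse \<rho> (arrow_inv \<rho> (A,s,B)) (A,s,B)" unfolding arrow_inv_def by (rule someI)
  then show ?thesis unfolding arrow_inverse_def is_inverse_def dom_a_def cod_a_def lbl_def
    by (cases "arrow_inv \<rho> (A,s,B)") auto
qed

definition Sw :: "'a \<Rightarrow> 'a \<Rightarrow> 'a \<Rightarrow> bool" where "Sw e f h \<longleftrightarrow> h*h = h \<and> h*e = h \<and> f*h = h \<and> e*h*f = e*f"

lemma Sw_unique:
  assumes "idem e" "idem f" "Sw e f h1" "Sw e f h2" shows "h1 = h2"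
proof -
  have a: "h1*h1 = h1" "h1*e = h1" "f*h1 = h1" "e*h1*f = e*f" using assms(3) unfolding Sw_def by auto
  have b: "h2*h2 = h2" "h2*e = h2" "f*h2 = h2" "e*h2*f = e*f" using assms(4) unfolding Sw_def by auto
  have "h2*h1 = h2 \<and> h1*h2 = h2"
    by (rule sandwich_le[OF LI assms(1,2)]) (use a b in \<open>auto simp: idem_def\<close>)
  moreover have "h1*h2 = h1 \<and> h2*h1 = h1"
    by (rule sandwich_le[OF LI assms(1,2)]) (use a b in \<open>auto simp: idem_def\<close>)
  ultimately show ?thesis by simp
qed

lemma wedge_char:
  assumes a: "is_arrow \<rho> (A,s,G)" and b: "is_arrow \<rho> (G,t,D)"
    and ia: "arrow_inv \<rho> (A,s,G) = (G,s',A)" and s1: "s*s'*s = s" and s2: "s'*s*s' = s'"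
    and ib: "arrow_inv \<rho> (G,t,D) = (D,t',G)" and t1: "t*t'*t = t" and t2: "t'*t*t' = t'"
  shows "\<exists>h. wedge \<rho> (G,t,D) (A,s,G) = (G,h,G) \<and> Sw (s'*s) (t*t') h \<and> is_arrow \<rho> (G,h,G)"
proof -
  define e where "e = s'*s"
  define f where "f = t*t'"
  have ee: "e*e = e" unfolding e_def using s2 by (metis mult.assoc)
  have ff: "f*f = f" unfolding f_def using t1 by (metis mult.assoc)
  have ie: "idem e" and iff: "idem f" using ee ff unfolding idem_def by auto
  have sw_iff: "g \<in> sandwich \<rho> G (comp_a (arrow_inv \<rho> (A,s,G)) (A,s,G)) (comp_a (G,t,D) (arrow_inv \<rho> (G,t,D)))
      \<longleftrightarrow> (\<exists>h. g = (G,h,G) \<and> is_arrow \<rho> (G,h,G) \<and> Sw e f h)" for g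
    unfolding sandwich_def loop_idem_def ia ib comp_a_def dom_a_def cod_a_def lbl_def Sw_def e_def f_def
    by (cases g) (auto simp: mult.assoc)
  define y where "y = sinv (e*f)"
  define h0 where "h0 = f*y*e"
  have yy: "y*(e*f)*y = y" unfolding y_def using sinv(2)[OF R, of "e*f"] by simp
  have yy2: "(e*f)*y*(e*f) = e*f" unfolding y_def using sinv(1)[OF R, of "e*f"] by simp
  have Sw0: "Sw e f h0" unfolding Sw_def h0_def
  proof (intro conjI)
    show "f * y * e * (f * y * e) = f * y * e" using yy by (metis mult.assoc)
    show "f * y * e * e = f * y * e" using ee by (metis mult.assoc)
    show "f * (f * y * e) = f * y * e" using ff by (metis mult.assoc)
    show "e * (f * y * e) * f = e * f" using yy2 by (metis mult.assoc)
  qed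
  have AQ: "A \<in> quot \<rho>" "G \<in> quot \<rho>" "m A (c s) = G" "m G (i (c s)) = A" using a unfolding is_arrow_iff by auto
  have BQ: "D \<in> quot \<rho>" "m G (c t) = D" "m D (i (c t)) = G" using b unfolding is_arrow_iff by auto
  have cs': "c s' = i (c s)" using Tinv_of_inverse[OF s1 s2] by simp
  have ct': "c t' = i (c t)" using Tinv_of_inverse[OF t1 t2] by simp
  define E where "E = c e"
  define F where "F = c f"
  have EQ: "E \<in> quot \<rho>" and FQ: "F \<in> quot \<rho>" unfolding E_def F_def by simp_all
  have E': "E = m (i (c s)) (c s)" unfolding E_def e_def using cs' by (simp del: tmul_cls add: c_mult)
  have F': "F = m (c t) (i (c t))" unfolding F_def f_def using ct' by (simp del: tmul_cls add: c_mult)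
  have EE: "m E E = E" unfolding E_def using ee by simp
  have FF: "m F F = F" unfolding F_def using ff by simp
  have EF: "m E F = m F E" unfolding E' F' by (rule T.comm_invx) simp_all
  have EFEF: "m (m E F) (m E F) = m E F" using T.idem_prod[OF EQ FQ EE FF] .
  have cy: "c y = m E F"
  proof -
    have "c y = i (m E F)" unfolding y_def E_def F_def by simp
    also have "\<dots> = m E F" using T.idem_inv[OF _ EFEF] EQ FQ by simp
    finally show ?thesis .
  qed
  have ch0: "c h0 = m E F"
  proof -
    have "c h0 = m F (m (c y) E)" unfolding h0_def E_def F_def by (simp add: mult.assoc)
    also have "\<dots> = m F (m (m E F) E)" by (simp only: cy)
    also have "\<dots> = m F (m (m F E) E)" by (simp only: EF)
    also have "\<dots> = m (m F F) (m E E)" using EQ FQ by simp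
    also have "\<dots> = m F E" by (simp only: EE FF)
    finally show ?thesis using EF by simp
  qed
  have GE: "m G E = G"
  proof -
    have "m G E = m (m G (i (c s))) (c s)" unfolding E' using AQ(2) by (simp del: tmul_cls tinv_cls)
    also have "\<dots> = G" using AQ by simp
    finally show ?thesis .
  qed
  have GF: "m G F = G"
  proof -
    have "m G F = m (m G (c t)) (i (c t))" unfolding F' using AQ(2) by (simp del: tmul_cls tinv_cls)
    also have "\<dots> = G" using BQ by simp
    finally show ?thesis .
  qed
  have hh0: "h0*h0 = h0" using Sw0 unfolding Sw_def by simp
  have GH: "m G (c h0) = G"
  proof -
    have "m G (c h0) = m (m G E) F" unfolding ch0 using AQ(2) EQ FQ by (simp del: tmul_cls tinv_cls)
    then show ?thesis using GE GF by simp
  qed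
  have ih0: "i (c h0) = c h0" using T.idem_inv[of "c h0"] hh0 by simp
  have arr0: "is_arrow \<rho> (G,h0,G)" unfolding is_arrow_iff using AQ GH ih0 by simp
  have ex: "\<exists>!g. g \<in> sandwich \<rho> G (comp_a (arrow_inv \<rho> (A,s,G)) (A,s,G)) (comp_a (G,t,D) (arrow_inv \<rho> (G,t,D)))"
  proof (rule ex_ex1I)
    show "\<exists>g. g \<in> sandwich \<rho> G (comp_a (arrow_inv \<rho> (A,s,G)) (A,s,G)) (comp_a (G,t,D) (arrow_inv \<rho> (G,t,D)))"
      using sw_iff arr0 Sw0 by blast
  next
    fix g1 g2 assume "g1 \<in> sandwich \<rho> G (comp_a (arrow_inv \<rho> (A,s,G)) (A,s,G)) (comp_a (G,t,D) (arrow_inv \<rho> (G,t,D)))"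
      "g2 \<in> sandwich \<rho> G (comp_a (arrow_inv \<rho> (A,s,G)) (A,s,G)) (comp_a (G,t,D) (arrow_inv \<rho> (G,t,D)))"
    then obtain h1 h2 where "g1 = (G,h1,G)" "Sw e f h1" "g2 = (G,h2,G)" "Sw e f h2" unfolding sw_iff by blast
    then show "g1 = g2" using Sw_unique[OF ie iff] by simp
  qed
  have "wedge \<rho> (G,t,D) (A,s,G) \<in> sandwich \<rho> G (comp_a (arrow_inv \<rho> (A,s,G)) (A,s,G)) (comp_a (G,t,D) (arrow_inv \<rho> (G,t,D)))"
    unfolding wedge_def cod_a_def snd_conv using theI'[OF ex] .
  then show ?thesis unfolding sw_iff e_def f_def by blast
qed

end



context setting begin

lemma claim3:
  assumes a: "is_arrow \<rho> a" and b: "is_arrow \<rho> b" and ab: "cod_a a = dom_a b"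
  shows "hat \<rho> (wedge \<rho> b a) = wedge \<rho> (hat \<rho> b) (hat \<rho> a)"
proof -
  obtain A s G where ad: "a = (A,s,G)" by (cases a) auto
  obtain G' t D where bd: "b = (G',t,D)" by (cases b) auto
  have GG: "G' = G" using ab unfolding ad bd cod_a_def dom_a_def by simp
  note a' = a[unfolded ad] and b' = b[unfolded bd GG]
  have Pa: "P a (hat \<rho> a)" and Pb: "P b (hat \<rho> b)" using hat_P a b by auto
  obtain A1 s0 B1 where ha: "hat \<rho> a = (A1,s0,B1)" by (cases "hat \<rho> a") auto
  obtain A2 t0 B2 where hb: "hat \<rho> b = (A2,t0,B2)" by (cases "hat \<rho> b") auto
  have 1: "A1 = A" "B1 = G" "nat_le s0 s" "c s0 = m (i A) G" "is_arrow \<rho> (A,s0,G)"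
    using Pa[unfolded ha, unfolded ad] unfolding P_def arrow_le_iff stable_iff by auto
  have 2: "A2 = G" "B2 = D" "nat_le t0 t" "c t0 = m (i G) D" "is_arrow \<rho> (G,t0,D)"
    using Pb[unfolded hb, unfolded bd GG] unfolding P_def arrow_le_iff stable_iff by auto
  have ha': "hat \<rho> a = (A,s0,G)" using ha 1 by simp
  have hb': "hat \<rho> b = (G,t0,D)" using hb 2 by simp
  obtain s' where ia: "arrow_inv \<rho> (A,s,G) = (G,s',A)" and s1: "s*s'*s = s" and s2: "s'*s*s' = s'"
    using arrow_inv_prop[OF a'] by blast
  obtain t' where ib: "arrow_inv \<rho> (G,t,D) = (D,t',G)" and t1: "t*t'*t = t" and t2: "t'*t*t' = t'"
    using arrow_inv_prop[OF b'] by blast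
  obtain s0' where ia0: "arrow_inv \<rho> (A,s0,G) = (G,s0',A)" and s01: "s0*s0'*s0 = s0" and s02: "s0'*s0*s0' = s0'"
    using arrow_inv_prop[OF 1(5)] by blast
  obtain t0' where ib0: "arrow_inv \<rho> (G,t0,D) = (D,t0',G)" and t01: "t0*t0'*t0 = t0" and t02: "t0'*t0*t0' = t0'"
    using arrow_inv_prop[OF 2(5)] by blast
  obtain h where wh: "wedge \<rho> (G,t,D) (A,s,G) = (G,h,G)" and swh: "Sw (s'*s) (t*t') h" and arh: "is_arrow \<rho> (G,h,G)"
    using wedge_char[OF a' b' ia s1 s2 ib t1 t2] by blast
  obtain k where wk: "wedge \<rho> (G,t0,D) (A,s0,G) = (G,k,G)" and swk: "Sw (s0'*s0) (t0*t0') k" and ark: "is_arrow \<rho> (G,k,G)"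
    using wedge_char[OF 1(5) 2(5) ia0 s01 s02 ib0 t01 t02] by blast
  have W1: "wedge \<rho> b a = (G,h,G)" using wh ad bd GG by simp
  have W2: "wedge \<rho> (hat \<rho> b) (hat \<rho> a) = (G,k,G)" using wk ha' hb' by simp
  have h: "h*h = h" "h*(s'*s) = h" "(t*t')*h = h" "(s'*s)*h*(t*t') = (s'*s)*(t*t')" using swh unfolding Sw_def by auto
  have k: "k*k = k" "k*(s0'*s0) = k" "(t0*t0')*k = k" "(s0'*s0)*k*(t0*t0') = (s0'*s0)*(t0*t0')" using swk unfolding Sw_def by auto
  have ie: "idem (s'*s)" unfolding idem_def using s2 by (metis mult.assoc)
  have iff: "idem (t*t')" unfolding idem_def using t1 by (metis mult.assoc)
  have f1: "s0*s'*s = s0" using nat_le_factor(2)[OF 1(3) s1] .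
  have f2: "t*t'*t0 = t0" using nat_le_factor(1)[OF 2(3) t1] .
  have ke: "k*(s'*s) = k"
  proof -
    have "k*(s'*s) = k*s0'*(s0*s'*s)" using k(2) by (metis mult.assoc)
    also have "\<dots> = k" using f1 k(2) by (metis mult.assoc)
    finally show ?thesis .
  qed
  have fk: "(t*t')*k = k"
  proof -
    have "(t*t')*k = (t*t'*t0)*t0'*k" using k(3) by (metis mult.assoc)
    also have "\<dots> = k" using f2 k(3) by (metis mult.assoc)
    finally show ?thesis .
  qed
  have kh: "k*h = k \<and> h*k = k"
    by (rule sandwich_le[OF LI ie iff]) (use h k ke fk in \<open>auto simp: idem_def\<close>)
  have le: "nat_le k h"
    by (rule mitsch[OF R, of k k h k]) (use kh k in auto)
  have AQ: "A \<in> quot \<rho>" "G \<in> quot \<rho>" "m A (c s) = G" using a' unfolding is_arrow_iff by auto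
  have BQ: "D \<in> quot \<rho>" "m D (i (c t)) = G" using b' unfolding is_arrow_iff by auto
  define K where "K = c k"
  define E0 where "E0 = c (s0'*s0)"
  define F0 where "F0 = c (t0*t0')"
  have KQ: "K \<in> quot \<rho>" and EQ: "E0 \<in> quot \<rho>" and FQ: "F0 \<in> quot \<rho>" unfolding K_def E0_def F0_def by simp_all
  have AG: "m A (m (i A) G) = G" using T.inv_l'[of A "c s"] AQ by simp
  have DG: "m D (m (i D) G) = G"
  proof -
    have "m D (m (i D) (m D (i (c t)))) = m D (i (c t))" by (rule T.inv_l') (use BQ in \<open>simp_all del: tinv_cls\<close>)
    then show ?thesis by (simp only: BQ(2))
  qed
  have E0v: "E0 = m (i G) G"
  proof -
    have "E0 = m (i (c s0)) (c s0)" unfolding E0_def using Tinv_of_inverse[OF s01 s02] by simp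
    also have "\<dots> = m (i (m (i A) G)) (m (i A) G)" by (simp only: 1(4))
    also have "\<dots> = m (i G) (m A (m (i A) G))" using AQ by (simp del: tmul_cls tinv_cls add: T.inv_mult)
    finally show ?thesis using AG by simp
  qed
  have F0v: "F0 = m (i G) G"
  proof -
    have "F0 = m (c t0) (i (c t0))" unfolding F0_def using Tinv_of_inverse[OF t01 t02] by simp
    also have "\<dots> = m (m (i G) D) (i (m (i G) D))" by (simp only: 2(4))
    also have "\<dots> = m (i G) (m D (m (i D) G))" using AQ BQ by (simp del: tmul_cls tinv_cls add: T.inv_mult)
    finally show ?thesis using DG by simp
  qed
  have KK: "m K K = K" unfolding K_def using k(1) by simp
  have KE: "m K E0 = K" unfolding K_def E0_def using k(2) by simp
  have FK: "m F0 K = K" unfolding K_def F0_def using k(3) by simp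
  have EKF: "m (m E0 K) F0 = m E0 F0" unfolding K_def E0_def F0_def using k(4) by (simp add: mult.assoc)
  have EE: "m E0 E0 = E0" unfolding E0v using AQ by simp
  have FF: "m F0 F0 = F0" unfolding F0v using AQ by simp
  have EK: "m E0 K = K" using T.idem_comm[OF EQ KQ EE KK] KE by simp
  have KF: "m K F0 = K" using T.idem_comm[OF FQ KQ FF KK] FK by simp
  have "K = m E0 F0" using EKF EK KF by simp
  also have "\<dots> = m (i G) G" unfolding E0v F0v using AQ by simp
  finally have st: "c k = m (i G) G" unfolding K_def .
  have "P (G,h,G) (G,k,G)" unfolding P_def using ark st le by (simp add: stable_iff arrow_le_iff)
  then have "hat \<rho> (G,h,G) = (G,k,G)" using hat_eq arh by blast
  then show ?thesis using W1 W2 by simp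
qed

end

theorem lemma5p4:
  fixes \<rho> :: "'a::semigroup_mult \<Rightarrow> 'a \<Rightarrow> bool" and a b :: "'a arrow"
  assumes "E_solid TYPE('a)" and "locally_inverse TYPE('a)"
    and "inverse_congruence \<rho>"
    and "\<forall>e. tmul \<rho> (cls \<rho> e) (cls \<rho> e) = cls \<rho> e \<longrightarrow> completely_simple_subsg (cls \<rho> e)"
    and "is_arrow \<rho> a" and "is_arrow \<rho> b" and "cod_a a = dom_a b"
  shows "hat \<rho> (hat \<rho> a) = hat \<rho> a
    \<and> hat \<rho> (comp_a a b) = comp_a (hat \<rho> a) (hat \<rho> b)
    \<and> hat \<rho> (wedge \<rho> b a) = wedge \<rho> (hat \<rho> b) (hat \<rho> a)"
proof -
  interpret setting \<rho> using assms(2,3,4) by unfold_locales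
  show ?thesis using claim1[OF assms(5)] claim2[OF assms(5,6,7)] claim3[OF assms(5,6,7)] by blast
qed



end
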